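(* Let $n_1,n_2,m_1,m_2$ be positive integers with $\gcd(n_1,n_2)=\gcd(m_1,m_2)=1$. If $f_1:\mathcal{D}(n_1)\to\mathcal{D}(m_1)$ and $f_2:\mathcal{D}(n_2)\to\mathcal{D}(m_2)$ are reducing, then so is $f_1f_2:\mathcal{D}(n_1n_2)\to\mathcal{D}(m_1m_2)$, defined by $(f_1f_2)(d_1d_2)=f_1(d_1)f_2(d_2)$ for $d_1\in\mathcal{D}(n_1)$, $d_2\in\mathcal{D}(n_2)$.
   Context: For a positive integer $n$, $\mathcal{D}(n)$ is the set of positive divisors of $n$, and $\lambda(n)$ is the least prime factor of $n$ if $n\ge2$, with $\lambda(1)=1$. For positive integers $m,n$, a function $f:\mathcal{D}(n)\to\mathcal{D}(m)$ is called reducing if for all $d,d'\in\mathcal{D}(n)$: (a) $f(d)\le d$; (b) $\frac{m/f(d)}{n/d}\le\min\{1,\ \lambda(m/f(d))/\lambda(n/d)\}$; (c) if $f(d)=2^if(d')$ for some $i\in\mathbb{Z}$, then $d=2^jd'$ for some $j\in\mathbb{Z}$. *)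

theory Defs
  imports Complex_Main "HOL-Computational_Algebra.Primes"
begin

definition divs :: "nat \<Rightarrow> nat set" where
  "divs n = {d. d dvd n}"

definition lpf :: "nat \<Rightarrow> nat" where
  "lpf n = (if n \<le> 1 then 1 else Min (prime_factors n))"

(* f : D(n) \<rightarrow> D(m) is reducing; f is given as a total function on nat,
   only its values on D(n) matter *)
definition reducing :: "(nat \<Rightarrow> nat) \<Rightarrow> nat \<Rightarrow> nat \<Rightarrow> bool" where
  "reducing f n m \<longleftrightarrow>
     (\<forall>d\<in>divs n. f d \<in> divs m) \<and>
     (\<forall>d\<in>divs n. f d \<le> d) \<and>
     (\<forall>d\<in>divs n.
        (real m / real (f d)) / (real n / real d)
          \<le> min 1 (real (lpf (m div f d)) / real (lpf (n div d)))) \<and>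
     (\<forall>d\<in>divs n. \<forall>d'\<in>divs n.
        (\<exists>i::int. real (f d) = 2 powi i * real (f d')) \<longrightarrow>
        (\<exists>j::int. real d = 2 powi j * real d'))"

end

theory Submission
  imports Defs
begin

definition rel2 :: "nat \<Rightarrow> nat \<Rightarrow> bool" where
  "rel2 x y \<longleftrightarrow> (\<exists>a b::nat. 2^a * x = 2^b * y)"

lemma rel_iff:
  assumes "x > 0" "y > 0"
  shows "(\<exists>i::int. real x = 2 powi i * real y) \<longleftrightarrow> rel2 x y"
proof
  assume "\<exists>i::int. real x = 2 powi i * real y"
  then obtain i::int where i: "real x = 2 powi i * real y" by blast
  show "rel2 x y"
  proof (cases "i \<ge> 0")
    case True
    then obtain k where k: "i = int k" by (metis nonneg_eq_int)
    have "real x = 2^k * real y" using i k by simp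
    then have "real x = real (2^k * y)" by simp
    then have "x = 2^k * y" by (simp only: of_nat_eq_iff)
    then show ?thesis unfolding rel2_def by (rule_tac x=0 in exI, rule_tac x=k in exI) simp
  next
    case False
    define k where "k = nat (-i)"
    have k: "i = - int k" using False k_def by simp
    have "real x = real y / 2^k" using i k by (simp add: power_int_minus divide_inverse)
    then have "2^k * real x = real y" by (simp add: field_simps)
    then have "real (2^k * x) = real y" by simp
    then have "2^k * x = y" by (simp only: of_nat_eq_iff)
    then show ?thesis unfolding rel2_def by (rule_tac x=k in exI, rule_tac x=0 in exI) simp
  qed
next
  assume "rel2 x y"
  then obtain a b :: nat where ab: "2^a * x = 2^b * y" unfolding rel2_def by blast
  then have "real (2^a * x) = real (2^b * y)" by simp
  then have "2^a * real x = 2^b * real y" by simp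
  then have "real x = 2 powi (int b - int a) * real y"
    by (simp add: power_int_diff field_simps)
  then show "\<exists>i::int. real x = 2 powi i * real y" by blast
qed

lemma pf_ne: "(x::nat) > 1 \<Longrightarrow> prime_factors x \<noteq> {}"
proof -
  assume "x > 1"
  then obtain p where "prime p" "p dvd x" using prime_factor_nat[of x] by auto
  then have "p \<in> prime_factors x" using \<open>x > 1\<close> by (auto simp: in_prime_factors_iff)
  then show ?thesis by auto
qed

lemma lpf_ge1: "lpf x \<ge> 1"
proof (cases "x \<le> 1")
  case True then show ?thesis by (simp add: lpf_def)
next
  case False
  have ne: "prime_factors x \<noteq> {}"
    using False by (intro pf_ne) simp
  have "Min (prime_factors x) \<in> prime_factors x" using ne by (intro Min_in) auto
  then have "prime (Min (prime_factors x))" by auto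
  then have "Min (prime_factors x) \<ge> 2" by (rule prime_ge_2_nat)
  then show ?thesis using False by (simp add: lpf_def)
qed

lemma lpf_le: assumes "x \<ge> 1" shows "lpf x \<le> x"
proof (cases "x \<le> 1")
  case True then show ?thesis using assms by (simp add: lpf_def)
next
  case False
  have ne: "prime_factors x \<noteq> {}"
    using False by (intro pf_ne) simp
  have "Min (prime_factors x) \<in> prime_factors x" using ne by (intro Min_in) auto
  then have "Min (prime_factors x) dvd x" by auto
  then show ?thesis using False by (simp add: lpf_def dvd_imp_le)
qed

lemma lpf_mult:
  assumes "x > 1" "y > 1"
  shows "lpf (x * y) = min (lpf x) (lpf y)"
proof -
  have nx: "prime_factors x \<noteq> {}" "prime_factors y \<noteq> {}"
    using pf_ne[OF assms(1)] pf_ne[OF assms(2)] by blast+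
  have "x * y > 1" using assms by (metis less_1_mult)
  have "lpf (x*y) = Min (prime_factors (x*y))" using \<open>x*y>1\<close> by (simp add: lpf_def)
  also have "\<dots> = Min (prime_factors x \<union> prime_factors y)" using assms by (subst prime_factors_product) auto
  also have "\<dots> = min (Min (prime_factors x)) (Min (prime_factors y))" by (rule Min_Un) (use nx in auto)
  also have "\<dots> = min (lpf x) (lpf y)" using assms by (simp add: lpf_def)
  finally show ?thesis .
qed

lemma lpf_prod_cases:
  assumes "a1 > 0" "a2 > 0" "a1 \<le> b1" "a2 \<le> b2"
  shows "(lpf (a1*a2) = lpf a1 \<and> lpf (b1*b2) \<le> lpf b1) \<or> (lpf (a1*a2) = lpf a2 \<and> lpf (b1*b2) \<le> lpf b2)"
proof (cases "b1 = 1")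
  case True
  then have "a1 = 1" using assms by simp
  then show ?thesis using True by simp
next
  case b1: False
  show ?thesis
  proof (cases "b2 = 1")
    case True
    then have "a2 = 1" using assms by simp
    then show ?thesis using True by simp
  next
    case b2: False
    have "b1 > 1" "b2 > 1" using assms b1 b2 by auto
    then have L: "lpf (b1*b2) = min (lpf b1) (lpf b2)" by (rule lpf_mult)
    show ?thesis
    proof (cases "a1 = 1")
      case True then show ?thesis using L by auto
    next
      case a1: False
      show ?thesis
      proof (cases "a2 = 1")
        case True then show ?thesis using L by auto
      next
        case a2: False
        have "a1 > 1" "a2 > 1" using assms a1 a2 by auto
        then have "lpf (a1*a2) = min (lpf a1) (lpf a2)" by (rule lpf_mult)
        then show ?thesis using L by (auto simp: min_def)
      qed
    qed
  qed
qed

lemma condC: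
  fixes a1 a2 b1 b2 :: nat
  assumes "a1 > 0" "a2 > 0" "a1 \<le> b1" "a2 \<le> b2"
    and "a1 * lpf b1 \<le> b1 * lpf a1" "a2 * lpf b2 \<le> b2 * lpf a2"
  shows "a1 * a2 * lpf (b1 * b2) \<le> b1 * b2 * lpf (a1 * a2)"
  using lpf_prod_cases[OF assms(1-4)]
proof
  assume h: "lpf (a1*a2) = lpf a1 \<and> lpf (b1*b2) \<le> lpf b1"
  have "a1 * a2 * lpf (b1 * b2) = (a1 * lpf (b1 * b2)) * a2" by simp
  also have "\<dots> \<le> (a1 * lpf b1) * a2" using h by (intro mult_le_mono1 mult_le_mono2) auto
  also have "\<dots> \<le> (b1 * lpf a1) * b2" by (rule mult_le_mono[OF assms(5) assms(4)])
  finally show ?thesis using h by (simp add: ac_simps)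
next
  assume h: "lpf (a1*a2) = lpf a2 \<and> lpf (b1*b2) \<le> lpf b2"
  have "a1 * a2 * lpf (b1 * b2) = a1 * (a2 * lpf (b1 * b2))" by simp
  also have "\<dots> \<le> a1 * (a2 * lpf b2)" using h by (intro mult_le_mono1 mult_le_mono2) auto
  also have "\<dots> \<le> b1 * (b2 * lpf a2)" by (rule mult_le_mono[OF assms(3) assms(6)])
  finally show ?thesis using h by (simp add: ac_simps)
qed


lemma rel_split:
  fixes x1 y1 x2 y2 m1 m2 :: nat
  assumes "x1 dvd m1" "y1 dvd m1" "x2 dvd m2" "y2 dvd m2" "odd m2" "coprime m1 m2"
    "x2 > 0" "rel2 (x1*x2) (y1*y2)"
  shows "rel2 x1 y1 \<and> x2 = y2"
proof -
  obtain a b where ab: "2^a * (x1*x2) = 2^b * (y1*y2)" using assms(8) unfolding rel2_def by blast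
  have ox2: "odd x2" "odd y2" using assms(3,4,5) dvd_trans by blast+
  have c1: "coprime x2 (2^b * y1)"
  proof -
    have "coprime x2 y1" using assms(2,3,6) coprime_commute coprime_divisors by blast
    moreover have "coprime x2 (2^b)" using ox2 by (simp add: coprime_commute)
    ultimately show ?thesis by simp
  qed
  have "x2 dvd (2^b * y1) * y2" using ab by (metis dvd_triv_right mult.assoc mult.left_commute)
  then have d1: "x2 dvd y2" using c1 coprime_dvd_mult_right_iff by blast
  have c2: "coprime y2 (2^a * x1)"
  proof -
    have "coprime y2 x1" using assms(1,4,6) coprime_commute coprime_divisors by blast
    moreover have "coprime y2 (2^a)" using ox2 by (simp add: coprime_commute)
    ultimately show ?thesis by simp
  qed
  have "y2 dvd (2^a * x1) * x2" using ab by (metis dvd_triv_right mult.assoc mult.left_commute)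
  then have d2: "y2 dvd x2" using c2 coprime_dvd_mult_right_iff by blast
  have eq: "x2 = y2" using d1 d2 by (rule dvd_antisym)
  have "(2^a * x1) * x2 = (2^b * y1) * x2" using ab eq by (simp add: ac_simps)
  then have "2^a * x1 = 2^b * y1" using assms(7) by simp
  then show ?thesis using eq unfolding rel2_def by blast
qed

lemma rel2_mult: "rel2 x1 y1 \<Longrightarrow> rel2 x2 y2 \<Longrightarrow> rel2 (x1*x2) (y1*y2)"
proof -
  assume "rel2 x1 y1" "rel2 x2 y2"
  then obtain a b c e where "2^a * x1 = 2^b * y1" "2^c * x2 = 2^e * y2" unfolding rel2_def by blast
  then have "(2^a * x1) * (2^c * x2) = (2^b * y1) * (2^e * y2)" by simp
  then have "2^(a+c) * (x1*x2) = 2^(b+e) * (y1*y2)" by (simp add: power_add ac_simps)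
  then show ?thesis unfolding rel2_def by blast
qed

definition condB :: "(nat \<Rightarrow> nat) \<Rightarrow> nat \<Rightarrow> nat \<Rightarrow> nat \<Rightarrow> bool" where
  "condB f n m d \<longleftrightarrow> (real m / real (f d)) / (real n / real d)
          \<le> min 1 (real (lpf (m div f d)) / real (lpf (n div d)))"

definition condC :: "(nat \<Rightarrow> nat) \<Rightarrow> nat \<Rightarrow> nat \<Rightarrow> bool" where
  "condC f d d' \<longleftrightarrow> ((\<exists>i::int. real (f d) = 2 powi i * real (f d')) \<longrightarrow>
        (\<exists>j::int. real d = 2 powi j * real d'))"

lemma reducing_eq: "reducing f n m \<longleftrightarrow> (\<forall>d\<in>divs n. f d dvd m) \<and> (\<forall>d\<in>divs n. f d \<le> d) \<and>
   (\<forall>d\<in>divs n. condB f n m d) \<and> (\<forall>d\<in>divs n. \<forall>d'\<in>divs n. condC f d d')"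
  unfolding reducing_def condB_def condC_def divs_def mem_Collect_eq by (rule refl)

lemma reducing_alt:
  assumes "n > 0" "m > 0"
  shows "reducing f n m \<longleftrightarrow>
    (\<forall>d\<in>divs n. f d dvd m \<and> f d \<le> d \<and> m div f d \<le> n div d \<and>
        (m div f d) * lpf (n div d) \<le> (n div d) * lpf (m div f d)) \<and>
    (\<forall>d\<in>divs n. \<forall>d'\<in>divs n. rel2 (f d) (f d') \<longrightarrow> rel2 d d')"
proof -
  have B: "condB f n m d \<longleftrightarrow>
        m div f d \<le> n div d \<and> (m div f d) * lpf (n div d) \<le> (n div d) * lpf (m div f d)"
    if "d dvd n" "f d dvd m" for d
  proof -
    define A where "A = m div f d"
    define Bb where "Bb = n div d"
    have fpos: "f d > 0" using that assms by (metis dvd_0_left_iff gr0I)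
    have dpos: "d > 0" using that assms by (metis dvd_0_left_iff gr0I)
    have mA: "m = A * f d" using that A_def by simp
    have nB: "n = Bb * d" using that Bb_def by simp
    have Bpos: "Bb > 0" using nB assms by (metis gr0I mult_is_0)
    have lB: "real (lpf Bb) > 0" using lpf_ge1[of Bb] by simp
    have e: "(real m / real (f d)) / (real n / real d) = real A / real Bb"
      using fpos dpos by (simp add: mA nB)
    have "real A / real Bb \<le> min 1 (real (lpf A) / real (lpf Bb)) \<longleftrightarrow>
          real A \<le> real Bb \<and> real A * real (lpf Bb) \<le> real Bb * real (lpf A)"
      using Bpos lB by (simp add: field_simps)
    also have "\<dots> \<longleftrightarrow> A \<le> Bb \<and> A * lpf Bb \<le> Bb * lpf A"
      by (metis of_nat_le_iff of_nat_mult)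
    finally show ?thesis using e A_def Bb_def unfolding condB_def by simp
  qed
  have C: "condC f d d' \<longleftrightarrow> (rel2 (f d) (f d') \<longrightarrow> rel2 d d')"
    if "d dvd n" "f d dvd m" "d' dvd n" "f d' dvd m" for d d'
  proof -
    have "f d > 0" "f d' > 0" "d > 0" "d' > 0" using that assms by (metis dvd_0_left_iff gr0I)+
    then show ?thesis unfolding condC_def by (simp add: rel_iff)
  qed
  show ?thesis
  proof
    assume r: "reducing f n m"
    then have r1: "f d dvd m" "f d \<le> d" "condB f n m d" if "d \<in> divs n" for d
      using that unfolding reducing_eq by blast+
    have r2: "condC f d d'" if "d \<in> divs n" "d' \<in> divs n" for d d'
      using r that unfolding reducing_eq by blast
    show "(\<forall>d\<in>divs n. f d dvd m \<and> f d \<le> d \<and> m div f d \<le> n div d \<and>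
        (m div f d) * lpf (n div d) \<le> (n div d) * lpf (m div f d)) \<and>
      (\<forall>d\<in>divs n. \<forall>d'\<in>divs n. rel2 (f d) (f d') \<longrightarrow> rel2 d d')"
    proof (intro conjI ballI impI)
      fix d assume d: "d \<in> divs n"
      have dd: "d dvd n" using d unfolding divs_def by simp
      show "f d dvd m" "f d \<le> d" using r1 d by blast+
      show "m div f d \<le> n div d" "(m div f d) * lpf (n div d) \<le> (n div d) * lpf (m div f d)"
        using B[OF dd r1(1)[OF d]] r1(3)[OF d] by blast+
    next
      fix d d' assume d: "d \<in> divs n" "d' \<in> divs n" "rel2 (f d) (f d')"
      have dd: "d dvd n" "d' dvd n" using d unfolding divs_def by simp_all
      show "rel2 d d'" using C[OF dd(1) r1(1)[OF d(1)] dd(2) r1(1)[OF d(2)]] r2[OF d(1,2)] d(3) by blast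
    qed
  next
    assume h: "(\<forall>d\<in>divs n. f d dvd m \<and> f d \<le> d \<and> m div f d \<le> n div d \<and>
        (m div f d) * lpf (n div d) \<le> (n div d) * lpf (m div f d)) \<and>
      (\<forall>d\<in>divs n. \<forall>d'\<in>divs n. rel2 (f d) (f d') \<longrightarrow> rel2 d d')"
    show "reducing f n m" unfolding reducing_eq
    proof (intro conjI ballI)
      fix d assume d: "d \<in> divs n"
      have dd: "d dvd n" using d unfolding divs_def by simp
      show "f d dvd m" "f d \<le> d" using h d by blast+
      show "condB f n m d" using B[OF dd] h d by blast
    next
      fix d d' assume d: "d \<in> divs n" "d' \<in> divs n"
      have dd: "d dvd n" "d' dvd n" using d unfolding divs_def by simp_all
      have "f d dvd m" "f d' dvd m" using h d by blast+
      then show "condC f d d'" using C[OF dd(1) _ dd(2)] h d by blast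
    qed
  qed
qed

lemma lemma3p6:
  fixes n1 n2 m1 m2 :: nat and f1 f2 g :: "nat \<Rightarrow> nat"
  assumes "n1 > 0" "n2 > 0" "m1 > 0" "m2 > 0"
    and "coprime n1 n2" "coprime m1 m2"
    and "reducing f1 n1 m1" "reducing f2 n2 m2"
    and "\<forall>d1\<in>divs n1. \<forall>d2\<in>divs n2. g (d1 * d2) = f1 d1 * f2 d2"
  shows "reducing g (n1 * n2) (m1 * m2)"
proof -
  note R1 = assms(7)[unfolded reducing_alt[OF assms(1,3)]]
  note R2 = assms(8)[unfolded reducing_alt[OF assms(2,4)]]
  have np: "n1 * n2 > 0" "m1 * m2 > 0" using assms(1-4) by simp_all
  have decomp: "\<exists>d1 d2. d = d1*d2 \<and> d1 \<in> divs n1 \<and> d2 \<in> divs n2" if "d \<in> divs (n1*n2)" for d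
    using that division_decomp[of d n1 n2] unfolding divs_def by auto
  have pos: "m div f > 0 \<and> f > 0" if "f dvd m" "m > 0" for f m :: nat
  proof -
    have "m = (m div f) * f" using that by simp
    then show ?thesis using that(2) by (metis gr0I mult_is_0)
  qed
  have part1: "g d dvd m1*m2 \<and> g d \<le> d \<and> (m1*m2) div g d \<le> (n1*n2) div d \<and>
        ((m1*m2) div g d) * lpf ((n1*n2) div d) \<le> ((n1*n2) div d) * lpf ((m1*m2) div g d)"
    if hd: "d \<in> divs (n1*n2)" for d
  proof -
    obtain d1 d2 where dd: "d = d1*d2" "d1 \<in> divs n1" "d2 \<in> divs n2" using decomp[OF hd] by blast
    have g: "g d = f1 d1 * f2 d2" using assms(9) dd by blast
    have h1: "f1 d1 dvd m1" "f1 d1 \<le> d1" "m1 div f1 d1 \<le> n1 div d1"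
      "(m1 div f1 d1) * lpf (n1 div d1) \<le> (n1 div d1) * lpf (m1 div f1 d1)"
      using R1 dd(2) by blast+
    have h2: "f2 d2 dvd m2" "f2 d2 \<le> d2" "m2 div f2 d2 \<le> n2 div d2"
      "(m2 div f2 d2) * lpf (n2 div d2) \<le> (n2 div d2) * lpf (m2 div f2 d2)"
      using R2 dd(3) by blast+
    have dv: "d1 dvd n1" "d2 dvd n2" using dd unfolding divs_def by auto
    have eA: "(m1*m2) div g d = (m1 div f1 d1) * (m2 div f2 d2)"
      using g h1(1) h2(1) by (simp add: div_mult_div_if_dvd)
    have eB: "(n1*n2) div d = (n1 div d1) * (n2 div d2)"
      using dd(1) dv by (simp add: div_mult_div_if_dvd)
    have p1: "m1 div f1 d1 > 0" using conjunct1[OF pos[OF h1(1) assms(3)]] .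
    have p2: "m2 div f2 d2 > 0" using conjunct1[OF pos[OF h2(1) assms(4)]] .
    have "g d dvd m1*m2" using g h1(1) h2(1) by (simp add: mult_dvd_mono)
    moreover have "g d \<le> d" using g dd(1) h1(2) h2(2) by (simp add: mult_le_mono)
    moreover have "(m1*m2) div g d \<le> (n1*n2) div d" using eA eB h1(3) h2(3) by (simp add: mult_le_mono)
    moreover have "((m1*m2) div g d) * lpf ((n1*n2) div d) \<le> ((n1*n2) div d) * lpf ((m1*m2) div g d)"
      unfolding eA eB by (rule condC[OF p1 p2 h1(3) h2(3) h1(4) h2(4)])
    ultimately show ?thesis by blast
  qed
  have part2: "rel2 d d'" if hd: "d \<in> divs (n1*n2)" "d' \<in> divs (n1*n2)" "rel2 (g d) (g d')" for d d'
  proof -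
    obtain d1 d2 where dd: "d = d1*d2" "d1 \<in> divs n1" "d2 \<in> divs n2" using decomp[OF hd(1)] by blast
    obtain e1 e2 where ee: "d' = e1*e2" "e1 \<in> divs n1" "e2 \<in> divs n2" using decomp[OF hd(2)] by blast
    have g: "g d = f1 d1 * f2 d2" "g d' = f1 e1 * f2 e2" using assms(9) dd ee by blast+
    have dv: "f1 d1 dvd m1" "f1 e1 dvd m1" "f2 d2 dvd m2" "f2 e2 dvd m2"
      using R1 R2 dd ee by blast+
    have c1: "rel2 (f1 d1) (f1 e1) \<longrightarrow> rel2 d1 e1" using R1 dd ee by blast
    have c2: "rel2 (f2 d2) (f2 e2) \<longrightarrow> rel2 d2 e2" using R2 dd ee by blast
    have refl: "rel2 x x" for x unfolding rel2_def by auto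
    have rr: "rel2 (f1 d1 * f2 d2) (f1 e1 * f2 e2)" using hd(3) g by simp
    have "odd m1 \<or> odd m2" using assms(6) by (metis coprime_common_divisor_nat even_numeral odd_one)
    then have "rel2 (f1 d1) (f1 e1) \<and> rel2 (f2 d2) (f2 e2)"
    proof
      assume "odd m2"
      have "rel2 (f1 d1) (f1 e1) \<and> f2 d2 = f2 e2"
        by (rule rel_split[OF dv(1,2,3,4) \<open>odd m2\<close> assms(6) conjunct2[OF pos[OF dv(3) assms(4)]] rr])
      then show ?thesis using refl by simp
    next
      assume "odd m1"
      have rr': "rel2 (f2 d2 * f1 d1) (f2 e2 * f1 e1)" using rr by (simp add: ac_simps)
      have "rel2 (f2 d2) (f2 e2) \<and> f1 d1 = f1 e1"
        by (rule rel_split[OF dv(3,4,1,2) \<open>odd m1\<close> _ conjunct2[OF pos[OF dv(1) assms(3)]] rr'])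
          (use assms(6) in \<open>simp add: coprime_commute\<close>)
      then show ?thesis using refl by simp
    qed
    then have "rel2 (d1*d2) (e1*e2)" using c1 c2 rel2_mult by blast
    then show ?thesis using dd ee by simp
  qed
  show ?thesis unfolding reducing_alt[OF np] using part1 part2 by blast
qed

end
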